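(* For $n\ge1$ define the $\mathbb{K}$-linear endomorphism $P_{\mu,n}$ of $M(\mu)\otimes V_1^{\otimes n}$ by \[ P_{\mu,n}=\frac{F_{\mu,n-1}\,F_{\mu+1,n-2}\cdots F_{\mu+n-2,1}\,F_{\mu+n-1}\;E_{\mu+n-1}\,E_{\mu+n-2,1}\cdots E_{\mu+1,n-2}\,E_{\mu,n-1}}{[\mu+n][\mu+n-1]\cdots[\mu+1]} \] (so $P_{\mu,1}=F_\mu E_\mu/[\mu+1]$). Then $P_{\mu,n}$ is a $U_q(\mathfrak{sl}_2)$-module endomorphism of $M(\mu)\otimes V_1^{\otimes n}$ satisfying $P_{\mu,n}^2=P_{\mu,n}$, and, for $n\ge2$ and every $i=1,\dots,n-1$, \[ \varepsilon_i\circ P_{\mu,n}=0,\qquad P_{\mu,n}\circ\eta_i=0, \] where $\varepsilon_i=\mathrm{Id}_{M(\mu)}\otimes\mathrm{Id}_{V_1}^{\otimes(i-1)}\otimes\varepsilon\otimes\mathrm{Id}_{V_1}^{\otimes(n-i-1)}: M(\mu)\otimes V_1^{\otimes n}\to M(\mu)\otimes V_1^{\otimes(n-2)}$ and $\eta_i=\mathrm{Id}_{M(\mu)}\otimes\mathrm{Id}_{V_1}^{\otimes(i-1)}\otimes\eta\otimes\mathrm{Id}_{V_1}^{\otimes(n-i-1)}: M(\mu)\otimes V_1^{\otimes (n-2)}\to M(\mu)\otimes V_1^{\otimes n}$ (acting on the $i$-th and $(i+1)$-st tensor factors $V_1$).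
   Context: Let $\mathbb{K}=\mathbb{C}(q,q^{\mu})$, where $q$ and $q^{\mu}$ are algebraically independent indeterminates; $[a]=\frac{q^{a}-q^{-a}}{q-q^{-1}}$ (so $[\mu+k]\neq0$ for integers $k$). $U_q(\mathfrak{sl}_2)$ is generated by $K^{\pm1},E,F$ with $KK^{-1}=K^{-1}K=1$, $KE=q^2EK$, $KF=q^{-2}FK$, $EF-FE=\frac{K-K^{-1}}{q-q^{-1}}$ and coproduct $\Delta(K^{\pm1})=K^{\pm1}\otimes K^{\pm1}$, $\Delta(F)=F\otimes1+K^{-1}\otimes F$, $\Delta(E)=E\otimes K+1\otimes E$; tensor products of modules carry the induced action. $V_1$ is the 2-dimensional module with basis $v_0,v_1$: $Kv_0=qv_0$, $Kv_1=q^{-1}v_1$, $Ev_0=0$, $Ev_1=v_0$, $Fv_0=v_1$, $Fv_1=0$. For $\lambda=\mu+k$ ($k\in\mathbb{Z}$), the Verma module $M(\lambda)$ has $\mathbb{K}$-basis $v_0,v_1,\dots$ with $Kv_i=q^{\lambda-2i}v_i$, $Ev_i=[i]v_{i-1}$, $Fv_i=[\lambda-i]v_{i+1}$, $v_{-1}=0$. For each such $\lambda$, the module maps $E_\lambda: M(\lambda)\otimes V_1\to M(\lambda+1)$ and $F_\lambda: M(\lambda+1)\to M(\lambda)\otimes V_1$ are defined by $E_\lambda(v_i\otimes v_0)=q^iv_i$, $E_\lambda(v_i\otimes v_1)=v_{i+1}$, $F_\lambda(v_i)=[\lambda+1-i]\,v_i\otimes v_0+q^{i-\lambda-1}[i]\,v_{i-1}\otimes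 v_1$. For $j\ge0$, $E_{\lambda,j}=E_\lambda\otimes\mathrm{Id}_{V_1}^{\otimes j}$ and $F_{\lambda,j}=F_\lambda\otimes\mathrm{Id}_{V_1}^{\otimes j}$ (with $E_{\lambda,0}=E_\lambda$, $F_{\lambda,0}=F_\lambda$); compositions are read right to left. The module maps $\varepsilon: V_1\otimes V_1\to\mathbb{K}$ and $\eta:\mathbb{K}\to V_1\otimes V_1$ are given by $\varepsilon(v_0\otimes v_0)=\varepsilon(v_1\otimes v_1)=0$, $\varepsilon(v_0\otimes v_1)=-q$, $\varepsilon(v_1\otimes v_0)=1$, and $\eta(1)=v_0\otimes v_1-q^{-1}v_1\otimes v_0$; tensoring with $\mathbb{K}$ is identified with the identity. *)

theory Defs
  imports "HOL-Computational_Algebra.Polynomial" "HOL-Computational_Algebra.Fraction_Field"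
begin

text \<open>K is the fraction field of C[q][Q], where Q stands for q^mu; the two
indeterminates are algebraically independent.\<close>

type_synonym K = "complex poly poly fract"

definition qq :: K where "qq = Fract [:[:0, 1:]:] 1"
definition qmu :: K where "qmu = Fract [:0, 1:] 1"

text \<open>Quantum integers: qint a = [a] for an integer a, and qbr k = [mu + k].\<close>
definition qint :: "int \<Rightarrow> K" where
  "qint a = (qq powi a - qq powi (- a)) / (qq - inverse qq)"
definition qbr :: "int \<Rightarrow> K" where
  "qbr k = (qmu * qq powi k - inverse (qmu * qq powi k)) / (qq - inverse qq)"

text \<open>A vector is a finitely supported coefficient function on a basis.
A linear map is given by its matrix m, where m b c is the coefficient of the
basis vector c in the image of the basis vector b.\<close>

definition lin :: "('b \<Rightarrow> 'c \<Rightarrow> K) \<Rightarrow> ('b \<Rightarrow> K) \<Rightarrow> ('c \<Rightarrow> K)" where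
  "lin m v = (\<lambda>c. \<Sum>b\<in>{b. v b \<noteq> 0}. v b * m b c)"

text \<open>Basis of M(mu+k) \<otimes> V_1^{\<otimes> n}: pairs (i, s) with s a list of length n;
v_i \<otimes> v_{s_1} \<otimes> ... \<otimes> v_{s_n}, where False stands for v_0 and True for v_1.\<close>

definition Vsp :: "nat \<Rightarrow> (nat \<times> bool list \<Rightarrow> K) set" where
  "Vsp n = {v. finite {b. v b \<noteq> 0} \<and> (\<forall>i s. v (i, s) \<noteq> 0 \<longrightarrow> length s = n)}"

datatype gen = GK | GKi | GE | GF

text \<open>Action on the Verma module M(mu+k): matrix coefficient from v_i to v_j.\<close>
fun Mmat :: "int \<Rightarrow> gen \<Rightarrow> nat \<Rightarrow> nat \<Rightarrow> K" where
  "Mmat k GK i j = (if j = i then qmu * qq powi (k - 2 * int i) else 0)"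
| "Mmat k GKi i j = (if j = i then inverse (qmu * qq powi (k - 2 * int i)) else 0)"
| "Mmat k GE i j = (if j + 1 = i then qint (int i) else 0)"
| "Mmat k GF i j = (if j = i + 1 then qbr (k - int i) else 0)"

fun Vmat :: "gen \<Rightarrow> bool \<Rightarrow> bool \<Rightarrow> K" where
  "Vmat GK t u = (if t = u then (if t then inverse qq else qq) else 0)"
| "Vmat GKi t u = (if t = u then (if t then qq else inverse qq) else 0)"
| "Vmat GE t u = (if t \<and> \<not> u then 1 else 0)"
| "Vmat GF t u = (if \<not> t \<and> u then 1 else 0)"

text \<open>Action on M(mu+k) \<otimes> V_1^{\<otimes> n} = (M(mu+k) \<otimes> V_1^{\<otimes>(n-1)}) \<otimes> V_1 via the coproduct
Delta(K^{\<plusminus>1}) = K^{\<plusminus>1} \<otimes> K^{\<plusminus>1}, Delta(E) = E \<otimes> K + 1 \<otimes> E, Delta(F) = F \<otimes> 1 + K^{-1} \<otimes> F.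
The lists here are reversed, so the head is the last tensor factor.\<close>
fun TR :: "int \<Rightarrow> gen \<Rightarrow> nat \<Rightarrow> bool list \<Rightarrow> nat \<Rightarrow> bool list \<Rightarrow> K" where
  "TR k g i [] j [] = Mmat k g i j"
| "TR k g i (t # r) j (u # r') =
     (case g of
        GK \<Rightarrow> TR k GK i r j r' * Vmat GK t u
      | GKi \<Rightarrow> TR k GKi i r j r' * Vmat GKi t u
      | GE \<Rightarrow> TR k GE i r j r' * Vmat GK t u + (if i = j \<and> r = r' then 1 else 0) * Vmat GE t u
      | GF \<Rightarrow> TR k GF i r j r' * (if t = u then 1 else 0) + TR k GKi i r j r' * Vmat GF t u)"
| "TR k g i (t # r) j [] = 0"
| "TR k g i [] j (u # r') = 0"

definition act :: "int \<Rightarrow> gen \<Rightarrow> (nat \<times> bool list \<Rightarrow> K) \<Rightarrow> (nat \<times> bool list \<Rightarrow> K)" where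
  "act k g = lin (\<lambda>(i, s) (j, s'). TR k g i (rev s) j (rev s'))"

text \<open>E_{mu+k} \<otimes> Id^{\<otimes> j}: M(mu+k) \<otimes> V_1 \<otimes> V_1^{\<otimes> j} \<rightarrow> M(mu+k+1) \<otimes> V_1^{\<otimes> j};
E_lambda(v_i \<otimes> v_0) = q^i v_i, E_lambda(v_i \<otimes> v_1) = v_{i+1} (independent of lambda).\<close>
fun Emap :: "int \<Rightarrow> nat \<times> bool list \<Rightarrow> nat \<times> bool list \<Rightarrow> K" where
  "Emap k (i, []) (j, s') = 0"
| "Emap k (i, t # r) (j, s') =
     (if s' = r then (if t then (if j = i + 1 then 1 else 0)
                      else (if j = i then qq ^ i else 0)) else 0)"

text \<open>F_{mu+k} \<otimes> Id^{\<otimes> j}: M(mu+k+1) \<otimes> V_1^{\<otimes> j} \<rightarrow> M(mu+k) \<otimes> V_1 \<otimes> V_1^{\<otimes> j};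
F_lambda(v_i) = [lambda+1-i] v_i \<otimes> v_0 + q^{i-lambda-1} [i] v_{i-1} \<otimes> v_1.\<close>
fun Fmap :: "int \<Rightarrow> nat \<times> bool list \<Rightarrow> nat \<times> bool list \<Rightarrow> K" where
  "Fmap k (i, r) (j, []) = 0"
| "Fmap k (i, r) (j, u # r') =
     (if r' = r then (if \<not> u then (if j = i then qbr (k + 1 - int i) else 0)
                      else (if j + 1 = i then inverse qmu * qq powi (int i - k - 1) * qint (int i)
                            else 0)) else 0)"

text \<open>P_{mu,n} = F_{mu,n-1} ... F_{mu+n-1} E_{mu+n-1} ... E_{mu,n-1} / ([mu+n]...[mu+1]).
The E's are applied first, starting with E_{mu,n-1}.\<close>
definition Ecomp :: "nat \<Rightarrow> (nat \<times> bool list \<Rightarrow> K) \<Rightarrow> (nat \<times> bool list \<Rightarrow> K)" where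
  "Ecomp n v = fold (\<lambda>j w. lin (Emap (int j)) w) [0..<n] v"
definition Fcomp :: "nat \<Rightarrow> (nat \<times> bool list \<Rightarrow> K) \<Rightarrow> (nat \<times> bool list \<Rightarrow> K)" where
  "Fcomp n v = fold (\<lambda>j w. lin (Fmap (int j)) w) (rev [0..<n]) v"
definition Pmap :: "nat \<Rightarrow> (nat \<times> bool list \<Rightarrow> K) \<Rightarrow> (nat \<times> bool list \<Rightarrow> K)" where
  "Pmap n v = (\<lambda>b. inverse (\<Prod>j=1..n. qbr (int j)) * Fcomp n (Ecomp n v) b)"

section \<open>Cup and cap maps on the i-th and (i+1)-st factors V_1 (i is 1-based)\<close>

fun epsV :: "bool \<Rightarrow> bool \<Rightarrow> K" where
  "epsV False True = - qq"
| "epsV True False = 1"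
| "epsV _ _ = 0"

definition eps_map :: "nat \<Rightarrow> nat \<times> bool list \<Rightarrow> nat \<times> bool list \<Rightarrow> K" where
  "eps_map i = (\<lambda>(a, s) (b, s').
     if b = a \<and> i < length s \<and> s' = take (i - 1) s @ drop (i + 1) s
     then epsV (s ! (i - 1)) (s ! i) else 0)"

definition eta_map :: "nat \<Rightarrow> nat \<times> bool list \<Rightarrow> nat \<times> bool list \<Rightarrow> K" where
  "eta_map i = (\<lambda>(a, s) (b, s').
     if b = a \<and> s' = take (i - 1) s @ [False, True] @ drop (i - 1) s then 1
     else if b = a \<and> s' = take (i - 1) s @ [True, False] @ drop (i - 1) s then - inverse qq
     else 0)"

end

theory Submission
  imports Defs
begin


lemma qq_nz: "qq \<noteq> 0"
  by (simp add: qq_def Zero_fract_def eq_fract)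
lemma qmu_nz: "qmu \<noteq> 0"
  by (simp add: qmu_def Zero_fract_def eq_fract)
lemma qq_sq: "qq * qq \<noteq> 1"
proof
  assume "qq * qq = 1"
  hence "[:[:0, 1:]:] * [:[:0, 1:]:] = (1:: complex poly poly)"
    by (simp add: qq_def One_fract_def eq_fract)
  hence "coeff (coeff ([:[:0, 1:]:] * [:[:0, 1:]:]) 0) 2 = coeff (coeff (1:: complex poly poly) 0) 2" by simp
  thus False by (simp add: numeral_2_eq_2)
qed
lemma qden_nz: "qq - inverse qq \<noteq> 0"
proof
  assume "qq - inverse qq = 0"
  hence "qq * (qq - inverse qq) = 0" by simp
  hence "qq * qq = 1" using qq_nz by (simp add: algebra_simps)
  thus False using qq_sq by simp
qed

lemma I1: "qbr (a + 1) = qq * qbr a + inverse (qmu * qq powi a)"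
  using qq_nz qmu_nz qden_nz
  by (simp add: qbr_def power_int_add field_simps)




definition supp :: "('b \<Rightarrow> K) \<Rightarrow> 'b set" where "supp v = {b. v b \<noteq> 0}"
definition fs :: "('b \<Rightarrow> K) \<Rightarrow> bool" where "fs v = finite (supp v)"
definition rowfin :: "('b \<Rightarrow> 'c \<Rightarrow> K) \<Rightarrow> bool" where "rowfin m = (\<forall>b. finite {c. m b c \<noteq> 0})"
definition mmul :: "('b \<Rightarrow> 'c \<Rightarrow> K) \<Rightarrow> ('c \<Rightarrow> 'd \<Rightarrow> K) \<Rightarrow> 'b \<Rightarrow> 'd \<Rightarrow> K" where
  "mmul m1 m2 b d = (\<Sum>c\<in>{c. m1 b c \<noteq> 0}. m1 b c * m2 c d)"

lemma lin_eq_sum: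
  assumes "finite A" "supp v \<subseteq> A"
  shows "lin m v c = (\<Sum>b\<in>A. v b * m b c)"
  unfolding lin_def
  by (rule sum.mono_neutral_left) (use assms in \<open>auto simp: supp_def\<close>)

lemma mmul_eq:
  assumes "finite A" "\<And>x. m1 b x \<noteq> 0 \<Longrightarrow> m2 x c \<noteq> 0 \<Longrightarrow> x \<in> A" "rowfin m1"
  shows "mmul m1 m2 b c = (\<Sum>x\<in>A. m1 b x * m2 x c)"
proof -
  have f: "finite {x. m1 b x \<noteq> 0}" using assms(3) by (simp add: rowfin_def)
  have "mmul m1 m2 b c = (\<Sum>x\<in>{x. m1 b x \<noteq> 0} \<union> A. m1 b x * m2 x c)"
    unfolding mmul_def by (rule sum.mono_neutral_left) (use f assms(1) in auto)
  also have "\<dots> = (\<Sum>x\<in>A. m1 b x * m2 x c)"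
  proof (rule sum.mono_neutral_right)
    show "finite ({x. m1 b x \<noteq> 0} \<union> A)" using f assms(1) by auto
    show "A \<subseteq> {x. m1 b x \<noteq> 0} \<union> A" by auto
    show "\<forall>i\<in>{x. m1 b x \<noteq> 0} \<union> A - A. m1 b i * m2 i c = 0"
      using assms(2) by auto
  qed
  finally show ?thesis .
qed

lemma supp_lin: "supp (lin m v) \<subseteq> (\<Union>b\<in>supp v. {c. m b c \<noteq> 0})"
proof
  fix c assume "c \<in> supp (lin m v)"
  hence "(\<Sum>b\<in>{b. v b \<noteq> 0}. v b * m b c) \<noteq> 0" by (simp add: supp_def lin_def)
  then obtain b where "v b \<noteq> 0" "v b * m b c \<noteq> 0"
    using sum.neutral[of "{b. v b \<noteq> 0}" "\<lambda>b. v b * m b c"] by blast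
  thus "c \<in> (\<Union>b\<in>supp v. {c. m b c \<noteq> 0})" by (auto simp: supp_def)
qed

lemma fs_lin: "fs v \<Longrightarrow> rowfin m \<Longrightarrow> fs (lin m v)"
  unfolding fs_def rowfin_def by (rule finite_subset[OF supp_lin]) auto

lemma lin_lincomb:
  assumes "fs v" "fs w"
  shows "lin m (\<lambda>b. c * v b + w b) = (\<lambda>x. c * lin m v x + lin m w x)"
proof
  fix x
  let ?A = "supp v \<union> supp w"
  have f: "finite ?A" using assms by (simp add: fs_def)
  have "lin m (\<lambda>b. c * v b + w b) x = (\<Sum>b\<in>?A. (c * v b + w b) * m b x)"
    by (rule lin_eq_sum[OF f]) (auto simp: supp_def)
  also have "\<dots> = c * (\<Sum>b\<in>?A. v b * m b x) + (\<Sum>b\<in>?A. w b * m b x)"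
    by (simp add: sum.distrib sum_distrib_left algebra_simps)
  also have "\<dots> = c * lin m v x + lin m w x"
    by (simp add: lin_eq_sum[OF f])
  finally show "lin m (\<lambda>b. c * v b + w b) x = c * lin m v x + lin m w x" .
qed

lemma lin_zero: "lin m (\<lambda>_. 0) = (\<lambda>_. 0)"
  by (simp add: lin_def)

lemma lin_smult: "lin m (\<lambda>b. c * v b) = (\<lambda>x. c * lin m v x)"
proof (cases "c = 0")
  case True thus ?thesis by (simp add: lin_def)
next
  case False
  thus ?thesis by (simp add: lin_def sum_distrib_left mult.assoc)
qed

lemma lin_cong: "(\<And>b. b \<in> supp v \<Longrightarrow> m1 b = m2 b) \<Longrightarrow> lin m1 v = lin m2 v"
  unfolding lin_def supp_def by (intro ext sum.cong) auto

lemma lin_zero_mat: "(\<And>b c. b \<in> supp v \<Longrightarrow> m b c = 0) \<Longrightarrow> lin m v = (\<lambda>_. 0)"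
  unfolding lin_def supp_def by (intro ext sum.neutral) auto

lemma lin_diag: assumes fv: "fs v" shows "lin (\<lambda>b c. if c = b then x else 0) v = (\<lambda>c. x * v c)"
proof
  fix c
  show "lin (\<lambda>b c. if c = b then x else 0) v c = x * v c"
  proof (cases "v c = 0")
    case True thus ?thesis by (simp add: lin_def) (intro sum.neutral, auto)
  next
    case False
    have "lin (\<lambda>b c. if c = b then x else 0) v c = (\<Sum>b\<in>{c}. v b * (if c = b then x else 0))"
      unfolding lin_def by (rule sum.mono_neutral_right) (use False fv in \<open>auto simp: fs_def supp_def\<close>)
    thus ?thesis by simp
  qed
qed

lemma lin_comp:
  assumes "fs v" "rowfin m1"
  shows "lin m2 (lin m1 v) = lin (mmul m1 m2) v"
proof
  fix d
  let ?S = "supp v"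
  let ?T = "\<Union>b\<in>?S. {c. m1 b c \<noteq> 0}"
  have fS: "finite ?S" using assms by (simp add: fs_def)
  have fT: "finite ?T" using fS assms(2) by (auto simp: rowfin_def)
  have "lin m2 (lin m1 v) d = (\<Sum>c\<in>?T. lin m1 v c * m2 c d)"
    by (rule lin_eq_sum[OF fT supp_lin])
  also have "\<dots> = (\<Sum>c\<in>?T. (\<Sum>b\<in>?S. v b * m1 b c) * m2 c d)"
    by (simp add: lin_eq_sum[OF fS])
  also have "\<dots> = (\<Sum>b\<in>?S. v b * (\<Sum>c\<in>?T. m1 b c * m2 c d))"
  proof -
    have "(\<Sum>c\<in>?T. (\<Sum>b\<in>?S. v b * m1 b c) * m2 c d) = (\<Sum>c\<in>?T. \<Sum>b\<in>?S. v b * (m1 b c * m2 c d))"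
      by (simp add: sum_distrib_right mult.assoc)
    also have "\<dots> = (\<Sum>b\<in>?S. \<Sum>c\<in>?T. v b * (m1 b c * m2 c d))"
      by (rule sum.swap)
    also have "\<dots> = (\<Sum>b\<in>?S. v b * (\<Sum>c\<in>?T. m1 b c * m2 c d))"
      by (simp add: sum_distrib_left)
    finally show ?thesis .
  qed
  also have "\<dots> = (\<Sum>b\<in>?S. v b * mmul m1 m2 b d)"
  proof (rule sum.cong[OF refl])
    fix b assume b: "b \<in> ?S"
    have "mmul m1 m2 b d = (\<Sum>c\<in>?T. m1 b c * m2 c d)"
      by (rule mmul_eq[OF fT _ assms(2)]) (use b in auto)
    thus "v b * (\<Sum>c\<in>?T. m1 b c * m2 c d) = v b * mmul m1 m2 b d" by simp
  qed
  also have "\<dots> = lin (mmul m1 m2) v d" by (simp add: lin_eq_sum[OF fS])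
  finally show "lin m2 (lin m1 v) d = lin (mmul m1 m2) v d" .
qed

lemma fs_lincomb: "fs v \<Longrightarrow> fs w \<Longrightarrow> fs (\<lambda>b. c * v b + w b)"
  unfolding fs_def supp_def by (rule finite_subset[of _ "{b. v b \<noteq> 0} \<union> {b. w b \<noteq> 0}"]) auto

lemma fs_smult: "fs v \<Longrightarrow> fs (\<lambda>b. c * v b)"
  unfolding fs_def supp_def by (rule finite_subset[of _ "{b. v b \<noteq> 0}"]) auto




definition Amat :: "int \<Rightarrow> gen \<Rightarrow> nat \<times> bool list \<Rightarrow> nat \<times> bool list \<Rightarrow> K" where
  "Amat k g = (\<lambda>(i, s) (j, s'). TR k g i (rev s) j (rev s'))"

lemma act_Amat: "act k g = lin (Amat k g)"
  by (simp add: act_def Amat_def)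

lemma Amat_simp[simp]: "Amat k g (i, s) (j, s') = TR k g i (rev s) j (rev s')"
  by (simp add: Amat_def)

lemma TR_nz: "TR k g i p j p' \<noteq> 0 \<Longrightarrow> j \<le> i + 1 \<and> length p' = length p"
proof (induction p arbitrary: p' g)
  case Nil
  thus ?case by (cases p'; cases g) (auto split: if_splits)
next
  case (Cons t p)
  then obtain u r' where p': "p' = u # r'" by (cases p') auto
  show ?case
  proof (cases g)
    case GK thus ?thesis using Cons p' by (auto split: if_splits)
  next
    case GKi thus ?thesis using Cons p' by (auto split: if_splits)
  next
    case GE thus ?thesis using Cons p' by (auto split: if_splits)
  next
    case GF thus ?thesis using Cons p' by (auto split: if_splits)
  qed
qed

lemma TR_len: "length p' \<noteq> length p \<Longrightarrow> TR k g i p j p' = 0"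
  using TR_nz by blast

lemma rowfin_Amat: "rowfin (Amat k g)"
  unfolding rowfin_def
proof
  fix b :: "nat \<times> bool list"
  obtain i s where b: "b = (i, s)" by (cases b)
  have "{c. Amat k g b c \<noteq> 0} \<subseteq> {..i+1} \<times> {s'. set s' \<subseteq> UNIV \<and> length s' = length s}"
    by (auto simp: b dest!: TR_nz)
  moreover have "finite ({..i+1} \<times> {s'::bool list. set s' \<subseteq> UNIV \<and> length s' = length s})"
    by (intro finite_cartesian_product finite_lists_length_eq) auto
  ultimately show "finite {c. Amat k g b c \<noteq> 0}" by (rule finite_subset)
qed

lemma rowfin_Emap: "rowfin (Emap k)"
  unfolding rowfin_def
proof
  fix b :: "nat \<times> bool list"
  obtain i s where b: "b = (i, s)" by (cases b)
  have "{c. Emap k b c \<noteq> 0} \<subseteq> {(i, tl s), (i+1, tl s)}"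
    by (cases s) (auto simp: b split: if_splits)
  thus "finite {c. Emap k b c \<noteq> 0}" by (rule finite_subset) auto
qed

lemma rowfin_Fmap: "rowfin (Fmap k)"
  unfolding rowfin_def
proof
  fix b :: "nat \<times> bool list"
  obtain i s where b: "b = (i, s)" by (cases b)
  have "{c. Fmap k b c \<noteq> 0} \<subseteq> {(i, False # s), (i - 1, True # s)}"
  proof
    fix c assume "c \<in> {c. Fmap k b c \<noteq> 0}"
    thus "c \<in> {(i, False # s), (i - 1, True # s)}"
      by (cases c, rename_tac j s', case_tac s') (auto simp: b split: if_splits)
  qed
  thus "finite {c. Fmap k b c \<noteq> 0}" by (rule finite_subset) auto
qed

lemma rowfin_eps: "rowfin (eps_map i)"
  unfolding rowfin_def
proof
  fix b :: "nat \<times> bool list"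
  obtain a s where b: "b = (a, s)" by (cases b)
  have "{c. eps_map i b c \<noteq> 0} \<subseteq> {(a, take (i - 1) s @ drop (i + 1) s)}"
    by (auto simp: b eps_map_def split: if_splits)
  thus "finite {c. eps_map i b c \<noteq> 0}" by (rule finite_subset) auto
qed

lemma rowfin_eta: "rowfin (eta_map i)"
  unfolding rowfin_def
proof
  fix b :: "nat \<times> bool list"
  obtain a s where b: "b = (a, s)" by (cases b)
  have "{c. eta_map i b c \<noteq> 0} \<subseteq> {(a, take (i - 1) s @ [False, True] @ drop (i - 1) s),
        (a, take (i - 1) s @ [True, False] @ drop (i - 1) s)}"
    by (auto simp: b eta_map_def split: if_splits)
  thus "finite {c. eta_map i b c \<noteq> 0}" by (rule finite_subset) auto
qed

lemma Emap_nil[simp]: "Emap k (i, []) c = 0"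
  by (cases c) simp

lemma Fmap_nil[simp]: "Fmap k b (j, []) = 0"
  by (cases b) simp

lemma mmul_E_row_nil: "mmul (Emap k) m2 (i, []) c = 0"
  by (simp add: mmul_def)

lemma mmul_E_row: "mmul (Emap k) m2 (i, t # r) c = (if t then m2 (i + 1, r) c else qq ^ i * m2 (i, r) c)"
proof -
  have "mmul (Emap k) m2 (i, t # r) c = (\<Sum>x\<in>{(if t then i + 1 else i, r)}. Emap k (i, t # r) x * m2 x c)"
    by (rule mmul_eq[OF _ _ rowfin_Emap]) (auto split: if_splits)
  thus ?thesis by simp
qed

lemma mmul_F_row: "mmul (Fmap k) m2 (i, r) c = qbr (k + 1 - int i) * m2 (i, False # r) c
   + (if i \<ge> 1 then inverse qmu * qq powi (int i - k - 1) * qint (int i) * m2 (i - 1, True # r) c else 0)"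
proof -
  have "mmul (Fmap k) m2 (i, r) c = (\<Sum>x\<in>{(i, False # r), (i - 1, True # r)}. Fmap k (i, r) x * m2 x c)"
  proof (rule mmul_eq[OF _ _ rowfin_Fmap])
    fix x assume "Fmap k (i, r) x \<noteq> 0"
    thus "x \<in> {(i, False # r), (i - 1, True # r)}"
      by (cases x, rename_tac j s', case_tac s') (auto split: if_splits)
  qed auto
  thus ?thesis by auto
qed

lemma mmul_E_col:
  assumes "rowfin m1"
  shows "mmul m1 (Emap k) b (j, r') = m1 b (j, False # r') * qq ^ j + (if j \<ge> 1 then m1 b (j - 1, True # r') else 0)"
proof -
  have "mmul m1 (Emap k) b (j, r') = (\<Sum>x\<in>{(j, False # r'), (j - 1, True # r')}. m1 b x * Emap k x (j, r'))"
  proof (rule mmul_eq[OF _ _ assms])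
    fix x assume "Emap k x (j, r') \<noteq> 0"
    thus "x \<in> {(j, False # r'), (j - 1, True # r')}"
      by (cases x, rename_tac i s, case_tac s) (auto split: if_splits)
  qed auto
  thus ?thesis by auto
qed

lemma mmul_F_col_nil: "rowfin m1 \<Longrightarrow> mmul m1 (Fmap k) b (j, []) = 0"
  by (simp add: mmul_def)

lemma mmul_F_col:
  assumes "rowfin m1"
  shows "mmul m1 (Fmap k) b (j, u # r') = (if u then m1 b (j + 1, r') * (inverse qmu * qq powi (int (j + 1) - k - 1) * qint (int (j + 1)))
      else m1 b (j, r') * qbr (k + 1 - int j))"
proof -
  have "mmul m1 (Fmap k) b (j, u # r') = (\<Sum>x\<in>{(if u then j + 1 else j, r')}. m1 b x * Fmap k x (j, u # r'))"
  proof (rule mmul_eq[OF _ _ assms])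
    fix x assume "Fmap k x (j, u # r') \<noteq> 0"
    thus "x \<in> {(if u then j + 1 else j, r')}"
      by (cases x) (auto split: if_splits)
  qed auto
  thus ?thesis by auto
qed

lemma mmul_eps_row: "mmul (eps_map i) m2 (a, s) c =
  (if i < length s then epsV (s ! (i - 1)) (s ! i) * m2 (a, take (i - 1) s @ drop (i + 1) s) c else 0)"
proof -
  have "mmul (eps_map i) m2 (a, s) c = (\<Sum>x\<in>{(a, take (i - 1) s @ drop (i + 1) s)}. eps_map i (a, s) x * m2 x c)"
    by (rule mmul_eq[OF _ _ rowfin_eps]) (auto simp: eps_map_def split: if_splits)
  thus ?thesis by (simp add: eps_map_def)
qed

lemma mmul_eta_row: "mmul (eta_map i) m2 (a, s) c =
  m2 (a, take (i - 1) s @ [False, True] @ drop (i - 1) s) c - inverse qq * m2 (a, take (i - 1) s @ [True, False] @ drop (i - 1) s) c"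
proof -
  have "mmul (eta_map i) m2 (a, s) c = (\<Sum>x\<in>{(a, take (i - 1) s @ [False, True] @ drop (i - 1) s),
        (a, take (i - 1) s @ [True, False] @ drop (i - 1) s)}. eta_map i (a, s) x * m2 x c)"
    by (rule mmul_eq[OF _ _ rowfin_eta]) (auto simp: eta_map_def split: if_splits)
  thus ?thesis by (simp add: eta_map_def)
qed




lemma pwnz[simp]: "qq powi a \<noteq> 0" using qq_nz by simp
lemma pw_add: "qq powi (a + b) = qq powi a * qq powi b" using qq_nz by (simp add: power_int_add)
lemma pw_diff: "qq powi (a - b) = qq powi a / qq powi b" using qq_nz by (simp add: power_int_diff)
lemma pw_mult: "qq powi (2 * a) = qq powi a * qq powi a" using qq_nz by (simp add: power_int_mult power2_eq_square power_int_mult_distrib)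
lemma pw_nat: "qq ^ n = qq powi (int n)" by simp
lemma qq2: "qq * qq - 1 \<noteq> 0" using qq_sq by simp

definition qd :: K where "qd = qq * qq - 1"
lemma qd_nz[simp]: "qd \<noteq> 0" using qq2 by (simp add: qd_def)

lemma qbr_alt: "qbr a = (qmu * qmu * (qq powi a * qq powi a) - 1) * qq / (qmu * qq powi a * qd)"
  using qq_nz qmu_nz qq2 unfolding qbr_def qd_def by (simp add: field_simps)

lemma qint_alt: "qint a = (qq powi a * qq powi a - 1) * qq / (qq powi a * qd)"
  using qq_nz qmu_nz qq2 unfolding qint_def qd_def by (simp add: field_simps power_int_minus)

lemmas qsimps = qbr_alt qint_alt pw_add pw_diff pw_mult power_int_minus Suc_le_eq



lemma TRE_base: "qq ^ j * TR k g i [t] j [False] + (if j \<ge> 1 then TR k g i [t] (j - 1) [True] else 0)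
 = (if t then TR (k+1) g (i+1) [] j [] else qq ^ i * TR (k+1) g i [] j [])"
  using qq_nz qmu_nz apply (cases g; cases t; cases i)
  apply (simp_all add: Suc_le_eq qsimps)
  apply (simp_all add: field_simps)
  apply safe
  apply simp_all
  apply (unfold qd_def)
  apply (((thin_tac "_")+)?, algebra)+
  done

lemma TRF_base: "(if u then TR (k+1) g i [] (j+1) [] * (inverse qmu * qq powi (int (j + 1) - k - 1) * qint (int (j + 1)))
      else TR (k+1) g i [] j [] * qbr (k + 1 - int j))
  = qbr (k + 1 - int i) * TR k g i [False] j [u]
   + (if i \<ge> 1 then inverse qmu * qq powi (int i - k - 1) * qint (int i) * TR k g (i - 1) [True] j [u] else 0)"
  using qq_nz qmu_nz apply (cases g; cases u; cases i)
  apply (simp_all add: Suc_le_eq qsimps)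
  apply (simp_all add: field_simps)
  apply safe
  apply simp_all
  apply (unfold qd_def)
  apply (((thin_tac "_")+)?, algebra)+
  done

lemma TRE: "qq ^ j * TR k g i (p @ [t]) j (p' @ [False]) + (if j \<ge> 1 then TR k g i (p @ [t]) (j - 1) (p' @ [True]) else 0)
 = (if t then TR (k+1) g (i+1) p j p' else qq ^ i * TR (k+1) g i p j p')"
proof (induction p arbitrary: p' g)
  case Nil
  show ?case
  proof (cases p')
    case Nil thus ?thesis by (simp only: append_Nil TRE_base)
  next
    case (Cons y r) thus ?thesis by (cases g) (auto simp: TR_len)
  qed
next
  case (Cons x p0)
  show ?case
  proof (cases p')
    case Nil thus ?thesis by (cases g) (auto simp: TR_len)
  next
    case (Cons y r)
    define L where "L g' = qq ^ j * TR k g' i (p0 @ [t]) j (r @ [False]) + (if j \<ge> 1 then TR k g' i (p0 @ [t]) (j - 1) (r @ [True]) else 0)" for g'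
    define R where "R g' = (if t then TR (k+1) g' (i+1) p0 j r else qq ^ i * TR (k+1) g' i p0 j r)" for g'
    have IH: "L g' = R g'" for g' unfolding L_def R_def by (rule Cons.IH)
    have D: "qq ^ j * (if i = j \<and> p0 @ [t] = r @ [False] then 1 else 0) + (if j \<ge> 1 then (if i = j - 1 \<and> p0 @ [t] = r @ [True] then 1 else 0) else 0)
      = (if t then (if i + 1 = j \<and> p0 = r then 1 else 0) else qq ^ i * (if i = j \<and> p0 = r then 1 else 0))"
      by (cases t) auto
    show ?thesis
    proof (cases g)
      case GK
      have "qq ^ j * TR k g i ((x # p0) @ [t]) j (p' @ [False]) + (if j \<ge> 1 then TR k g i ((x # p0) @ [t]) (j - 1) (p' @ [True]) else 0)
        = L GK * Vmat GK x y" unfolding L_def using GK Cons by (simp add: algebra_simps)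
      also have "\<dots> = R GK * Vmat GK x y" by (simp add: IH)
      also have "\<dots> = (if t then TR (k+1) g (i+1) (x # p0) j p' else qq ^ i * TR (k+1) g i (x # p0) j p')"
        unfolding R_def using GK Cons by simp
      finally show ?thesis .
    next
      case GKi
      have "qq ^ j * TR k g i ((x # p0) @ [t]) j (p' @ [False]) + (if j \<ge> 1 then TR k g i ((x # p0) @ [t]) (j - 1) (p' @ [True]) else 0)
        = L GKi * Vmat GKi x y" unfolding L_def using GKi Cons by (simp add: algebra_simps)
      also have "\<dots> = R GKi * Vmat GKi x y" by (simp add: IH)
      also have "\<dots> = (if t then TR (k+1) g (i+1) (x # p0) j p' else qq ^ i * TR (k+1) g i (x # p0) j p')"
        unfolding R_def using GKi Cons by simp
      finally show ?thesis .
    next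
      case GE
      have "qq ^ j * TR k g i ((x # p0) @ [t]) j (p' @ [False]) + (if j \<ge> 1 then TR k g i ((x # p0) @ [t]) (j - 1) (p' @ [True]) else 0)
        = L GE * Vmat GK x y + (qq ^ j * (if i = j \<and> p0 @ [t] = r @ [False] then 1 else 0) + (if j \<ge> 1 then (if i = j - 1 \<and> p0 @ [t] = r @ [True] then 1 else 0) else 0)) * Vmat GE x y"
        unfolding L_def using GE Cons by (simp add: algebra_simps)
      also have "\<dots> = R GE * Vmat GK x y + (if t then (if i + 1 = j \<and> p0 = r then 1 else 0) else qq ^ i * (if i = j \<and> p0 = r then 1 else 0)) * Vmat GE x y"
        by (simp only: IH D)
      also have "\<dots> = (if t then TR (k+1) g (i+1) (x # p0) j p' else qq ^ i * TR (k+1) g i (x # p0) j p')"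
        unfolding R_def using GE Cons by (simp add: algebra_simps)
      finally show ?thesis .
    next
      case GF
      have "qq ^ j * TR k g i ((x # p0) @ [t]) j (p' @ [False]) + (if j \<ge> 1 then TR k g i ((x # p0) @ [t]) (j - 1) (p' @ [True]) else 0)
        = L GF * (if x = y then 1 else 0) + L GKi * Vmat GF x y"
        unfolding L_def using GF Cons by (simp add: algebra_simps)
      also have "\<dots> = R GF * (if x = y then 1 else 0) + R GKi * Vmat GF x y"
        by (simp only: IH)
      also have "\<dots> = (if t then TR (k+1) g (i+1) (x # p0) j p' else qq ^ i * TR (k+1) g i (x # p0) j p')"
        unfolding R_def using GF Cons by (simp add: algebra_simps)
      finally show ?thesis .
    qed
  qed
qed


lemma TRF: "(if u then TR (k+1) g i p (j+1) p' * (inverse qmu * qq powi (int (j + 1) - k - 1) * qint (int (j + 1))) else TR (k+1) g i p j p' * qbr (k + 1 - int j)) = qbr (k + 1 - int i) * TR k g i (p @ [False]) j (p' @ [u]) + (if i \<ge> 1 then inverse qmu * qq powi (int i - k - 1) * qint (int i) * TR k g (i - 1) (p @ [True]) j (p' @ [u]) else 0)"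
proof (induction p arbitrary: p' g)
  case Nil
  show ?case
  proof (cases p')
    case Nil thus ?thesis by (simp only: append_Nil TRF_base)
  next
    case (Cons y r) thus ?thesis by (cases g) (auto simp: TR_len)
  qed
next
  case (Cons x p0)
  show ?case
  proof (cases p')
    case Nil thus ?thesis by (cases g) (auto simp: TR_len)
  next
    case (Cons y r)
    define L where "L g' = (if u then TR (k+1) g' i p0 (j+1) r * (inverse qmu * qq powi (int (j + 1) - k - 1) * qint (int (j + 1))) else TR (k+1) g' i p0 j r * qbr (k + 1 - int j))" for g'
    define R where "R g' = qbr (k + 1 - int i) * TR k g' i (p0 @ [False]) j (r @ [u]) + (if i \<ge> 1 then inverse qmu * qq powi (int i - k - 1) * qint (int i) * TR k g' (i - 1) (p0 @ [True]) j (r @ [u]) else 0)" for g'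
    have IH: "L g' = R g'" for g' unfolding L_def R_def by (rule Cons.IH)
    have D: "(if u then (if i = j + 1 \<and> p0 = r then 1 else 0) * (inverse qmu * qq powi (int (j + 1) - k - 1) * qint (int (j + 1))) else (if i = j \<and> p0 = r then 1 else 0) * qbr (k + 1 - int j))
       = qbr (k + 1 - int i) * (if i = j \<and> p0 @ [False] = r @ [u] then 1 else 0) + (if i \<ge> 1 then inverse qmu * qq powi (int i - k - 1) * qint (int i) * (if i - 1 = j \<and> p0 @ [True] = r @ [u] then 1 else 0) else 0)"
      by (cases u) auto
    show ?thesis
    proof (cases g)
      case GK
      have "(if u then TR (k+1) g i (x # p0) (j+1) p' * (inverse qmu * qq powi (int (j + 1) - k - 1) * qint (int (j + 1))) else TR (k+1) g i (x # p0) j p' * qbr (k + 1 - int j)) = L GK * Vmat GK x y" unfolding L_def using GK Cons by (simp add: algebra_simps)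
      also have "\<dots> = R GK * Vmat GK x y" by (simp add: IH)
      also have "\<dots> = qbr (k + 1 - int i) * TR k g i ((x # p0) @ [False]) j (p' @ [u]) + (if i \<ge> 1 then inverse qmu * qq powi (int i - k - 1) * qint (int i) * TR k g (i - 1) ((x # p0) @ [True]) j (p' @ [u]) else 0)" unfolding R_def using GK Cons by (simp add: algebra_simps)
      finally show ?thesis .
    next
      case GKi
      have "(if u then TR (k+1) g i (x # p0) (j+1) p' * (inverse qmu * qq powi (int (j + 1) - k - 1) * qint (int (j + 1))) else TR (k+1) g i (x # p0) j p' * qbr (k + 1 - int j)) = L GKi * Vmat GKi x y" unfolding L_def using GKi Cons by (simp add: algebra_simps)
      also have "\<dots> = R GKi * Vmat GKi x y" by (simp add: IH)
      also have "\<dots> = qbr (k + 1 - int i) * TR k g i ((x # p0) @ [False]) j (p' @ [u]) + (if i \<ge> 1 then inverse qmu * qq powi (int i - k - 1) * qint (int i) * TR k g (i - 1) ((x # p0) @ [True]) j (p' @ [u]) else 0)" unfolding R_def using GKi Cons by (simp add: algebra_simps)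
      finally show ?thesis .
    next
      case GE
      have "(if u then TR (k+1) g i (x # p0) (j+1) p' * (inverse qmu * qq powi (int (j + 1) - k - 1) * qint (int (j + 1))) else TR (k+1) g i (x # p0) j p' * qbr (k + 1 - int j)) = L GE * Vmat GK x y + (if u then (if i = j + 1 \<and> p0 = r then 1 else 0) * (inverse qmu * qq powi (int (j + 1) - k - 1) * qint (int (j + 1))) else (if i = j \<and> p0 = r then 1 else 0) * qbr (k + 1 - int j)) * Vmat GE x y"
        unfolding L_def using GE Cons by (simp add: algebra_simps)
      also have "\<dots> = R GE * Vmat GK x y + (qbr (k + 1 - int i) * (if i = j \<and> p0 @ [False] = r @ [u] then 1 else 0) + (if i \<ge> 1 then inverse qmu * qq powi (int i - k - 1) * qint (int i) * (if i - 1 = j \<and> p0 @ [True] = r @ [u] then 1 else 0) else 0)) * Vmat GE x y"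
        by (simp only: IH D)
      also have "\<dots> = qbr (k + 1 - int i) * TR k g i ((x # p0) @ [False]) j (p' @ [u]) + (if i \<ge> 1 then inverse qmu * qq powi (int i - k - 1) * qint (int i) * TR k g (i - 1) ((x # p0) @ [True]) j (p' @ [u]) else 0)" unfolding R_def using GE Cons by (simp add: algebra_simps)
      finally show ?thesis .
    next
      case GF
      have "(if u then TR (k+1) g i (x # p0) (j+1) p' * (inverse qmu * qq powi (int (j + 1) - k - 1) * qint (int (j + 1))) else TR (k+1) g i (x # p0) j p' * qbr (k + 1 - int j)) = L GF * (if x = y then 1 else 0) + L GKi * Vmat GF x y"
        unfolding L_def using GF Cons by (simp add: algebra_simps)
      also have "\<dots> = R GF * (if x = y then 1 else 0) + R GKi * Vmat GF x y" by (simp only: IH)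
      also have "\<dots> = qbr (k + 1 - int i) * TR k g i ((x # p0) @ [False]) j (p' @ [u]) + (if i \<ge> 1 then inverse qmu * qq powi (int i - k - 1) * qint (int i) * TR k g (i - 1) ((x # p0) @ [True]) j (p' @ [u]) else 0)" unfolding R_def using GF Cons by (simp add: algebra_simps)
      finally show ?thesis .
    qed
  qed
qed






lemma qq_pow: "qq ^ n = Fract ([:[:0, 1:]:] ^ n) 1"
  by (induction n) (auto simp: qq_def One_fract_def)

lemma degP: "degree (([:[:0, 1:]:] :: complex poly poly) ^ n) = 0"
  by (simp add: degree_power_eq)

lemma qbr_nz: "qbr k \<noteq> 0"
proof
  assume "qbr k = 0"
  hence "(qmu * qmu * (qq powi k * qq powi k) - 1) * qq / (qmu * qq powi k * qd) = 0"
    by (simp add: qbr_alt)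
  hence e: "qmu * qmu * (qq powi k * qq powi k) = 1" using qq_nz qmu_nz by simp
  define P :: "complex poly poly" where "P = [:[:0, 1:]:]"
  define X :: "complex poly poly" where "X = [:0, 1:]"
  have dX: "degree (X * X) = 2" by (simp add: X_def)
  have Pnz: "P ^ n \<noteq> 0" for n by (simp add: P_def)
  have dP: "degree (P ^ n * P ^ n) = 0" for n
    by (simp add: P_def degree_mult_eq degP)
  show False
  proof (cases "k \<ge> 0")
    case True
    then obtain n where k: "k = int n" by (metis nonneg_eq_int)
    have "Fract (X * X * (P ^ n * P ^ n)) 1 = Fract 1 1"
      using e by (simp add: k qq_pow qmu_def P_def X_def One_fract_def)
    hence "X * X * (P ^ n * P ^ n) = 1" by (simp add: eq_fract)
    hence "degree (X * X * (P ^ n * P ^ n)) = 0" by simp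
    moreover have "degree (X * X * (P ^ n * P ^ n)) = degree (X * X) + degree (P ^ n * P ^ n)"
      by (rule degree_mult_eq) (use Pnz[of n] in \<open>auto simp: X_def\<close>)
    ultimately show False using dX dP[of n] by simp
  next
    case False
    then obtain n where k: "k = - int n" by (metis linear neg_0_le_iff_le nonneg_eq_int minus_minus)
    have "Fract (X * X) (P ^ n * P ^ n) = Fract 1 1"
      using e by (simp add: k qq_pow qmu_def P_def X_def One_fract_def power_int_minus)
    hence "X * X = P ^ n * P ^ n" using Pnz by (simp add: eq_fract)
    thus False using dX dP[of n] by simp
  qed
qed



lemma E_equiv:
  assumes "fs v"
  shows "lin (Emap k') (act k g v) = act (k + 1) g (lin (Emap k') v)"
proof -
  have "lin (Emap k') (act k g v) = lin (mmul (Amat k g) (Emap k')) v"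
    by (simp add: act_Amat lin_comp[OF assms rowfin_Amat])
  also have "\<dots> = lin (mmul (Emap k') (Amat (k + 1) g)) v"
  proof (rule lin_cong, rule ext)
    fix b c :: "nat \<times> bool list"
    obtain i s where b: "b = (i, s)" by (cases b)
    obtain j r' where c: "c = (j, r')" by (cases c)
    show "mmul (Amat k g) (Emap k') b c = mmul (Emap k') (Amat (k + 1) g) b c"
    proof (cases s)
      case Nil thus ?thesis
        by (simp add: b c mmul_E_col[OF rowfin_Amat] mmul_E_row_nil TR_len)
    next
      case (Cons t r)
      have "mmul (Amat k g) (Emap k') b c = qq ^ j * TR k g i (rev r @ [t]) j (rev r' @ [False]) + (if j \<ge> 1 then TR k g i (rev r @ [t]) (j - 1) (rev r' @ [True]) else 0)"
        by (simp add: b c Cons mmul_E_col[OF rowfin_Amat] mult.commute)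
      also have "\<dots> = (if t then TR (k+1) g (i+1) (rev r) j (rev r') else qq ^ i * TR (k+1) g i (rev r) j (rev r'))"
        by (rule TRE)
      also have "\<dots> = mmul (Emap k') (Amat (k + 1) g) b c"
        by (simp add: b c Cons mmul_E_row)
      finally show ?thesis .
    qed
  qed
  also have "\<dots> = act (k + 1) g (lin (Emap k') v)"
    by (simp add: act_Amat lin_comp[OF assms rowfin_Emap])
  finally show ?thesis .
qed

lemma F_equiv:
  assumes "fs v"
  shows "lin (Fmap k) (act (k + 1) g v) = act k g (lin (Fmap k) v)"
proof -
  have "lin (Fmap k) (act (k + 1) g v) = lin (mmul (Amat (k + 1) g) (Fmap k)) v"
    by (simp add: act_Amat lin_comp[OF assms rowfin_Amat])
  also have "\<dots> = lin (mmul (Fmap k) (Amat k g)) v"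
  proof (rule lin_cong, rule ext)
    fix b c :: "nat \<times> bool list"
    obtain i r where b: "b = (i, r)" by (cases b)
    obtain j s' where c: "c = (j, s')" by (cases c)
    show "mmul (Amat (k + 1) g) (Fmap k) b c = mmul (Fmap k) (Amat k g) b c"
    proof (cases s')
      case Nil thus ?thesis
        by (simp add: b c mmul_F_col_nil[OF rowfin_Amat] mmul_F_row TR_len)
    next
      case (Cons u r')
      have "mmul (Amat (k + 1) g) (Fmap k) b c = (if u then TR (k+1) g i (rev r) (j+1) (rev r') * (inverse qmu * qq powi (int (j + 1) - k - 1) * qint (int (j + 1))) else TR (k+1) g i (rev r) j (rev r') * qbr (k + 1 - int j))"
        by (simp add: b c Cons mmul_F_col[OF rowfin_Amat])
      also have "\<dots> = qbr (k + 1 - int i) * TR k g i (rev r @ [False]) j (rev r' @ [u]) + (if i \<ge> 1 then inverse qmu * qq powi (int i - k - 1) * qint (int i) * TR k g (i - 1) (rev r @ [True]) j (rev r' @ [u]) else 0)"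
        by (rule TRF)
      also have "\<dots> = mmul (Fmap k) (Amat k g) b c"
        by (simp add: b c Cons mmul_F_row)
      finally show ?thesis .
    qed
  qed
  also have "\<dots> = act k g (lin (Fmap k) v)"
    by (simp add: act_Amat lin_comp[OF assms rowfin_Fmap])
  finally show ?thesis .
qed

lemma EF_id_alg: "qbr (k + 1 - int i) * qq ^ i + (if i \<ge> 1 then inverse qmu * qq powi (int i - k - 1) * qint (int i) else 0) = qbr (k + 1)"
  using qq_nz qmu_nz
  apply (cases i)
  apply (simp_all add: qsimps)
  apply (simp_all add: field_simps)
  apply ((unfold qd_def)?)
  apply ((((thin_tac "_")+)?, algebra)+)?
  done

lemma EF_id:
  assumes "fs u"
  shows "lin (Emap k') (lin (Fmap k) u) = (\<lambda>b. qbr (k + 1) * u b)"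
proof -
  have "lin (Emap k') (lin (Fmap k) u) = lin (mmul (Fmap k) (Emap k')) u"
    by (rule lin_comp[OF assms rowfin_Fmap])
  also have "\<dots> = lin (\<lambda>b c. if c = b then qbr (k + 1) else 0) u"
  proof (rule lin_cong, rule ext)
    fix b c :: "nat \<times> bool list"
    obtain i r where b: "b = (i, r)" by (cases b)
    obtain j s' where c: "c = (j, s')" by (cases c)
    show "mmul (Fmap k) (Emap k') b c = (if c = b then qbr (k + 1) else 0)"
      using EF_id_alg[of k i]
      by (cases i) (auto simp: b c mmul_F_row)
  qed
  also have "\<dots> = (\<lambda>b. qbr (k + 1) * u b)" by (rule lin_diag[OF assms])
  finally show ?thesis .
qed





definition Ec :: "nat \<Rightarrow> nat \<Rightarrow> (nat \<times> bool list \<Rightarrow> K) \<Rightarrow> (nat \<times> bool list \<Rightarrow> K)" where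
  "Ec a n v = fold (\<lambda>j w. lin (Emap (int j)) w) [a..<a+n] v"
definition Fc :: "nat \<Rightarrow> nat \<Rightarrow> (nat \<times> bool list \<Rightarrow> K) \<Rightarrow> (nat \<times> bool list \<Rightarrow> K)" where
  "Fc a n v = fold (\<lambda>j w. lin (Fmap (int j)) w) (rev [a..<a+n]) v"

lemma Ecomp_Ec: "Ecomp n v = Ec 0 n v" by (simp add: Ecomp_def Ec_def)
lemma Fcomp_Fc: "Fcomp n v = Fc 0 n v" by (simp add: Fcomp_def Fc_def)

lemma Ec_0[simp]: "Ec a 0 v = v" by (simp add: Ec_def)
lemma Fc_0[simp]: "Fc a 0 v = v" by (simp add: Fc_def)

lemma Ec_Suc: "Ec a (Suc n) v = lin (Emap (int (a + n))) (Ec a n v)"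
  by (simp add: Ec_def)
lemma Ec_Suc2: "Ec a (Suc n) v = Ec (Suc a) n (lin (Emap (int a)) v)"
  by (simp add: Ec_def upt_rec)
lemma Fc_Suc: "Fc a (Suc n) v = Fc a n (lin (Fmap (int (a + n))) v)"
  by (simp add: Fc_def)
lemma Fc_Suc2: "Fc a (Suc n) v = lin (Fmap (int a)) (Fc (Suc a) n v)"
  by (simp add: Fc_def upt_rec)

lemma fs_Ec: "fs v \<Longrightarrow> fs (Ec a n v)"
  by (induction n arbitrary: v) (auto simp: Ec_Suc intro!: fs_lin rowfin_Emap)
lemma fs_Fc: "fs v \<Longrightarrow> fs (Fc a n v)"
  by (induction n arbitrary: v) (auto simp: Fc_Suc intro!: fs_lin rowfin_Fmap)

lemma Ec_lincomb: "fs v \<Longrightarrow> fs w \<Longrightarrow> Ec a n (\<lambda>b. c * v b + w b) = (\<lambda>b. c * Ec a n v b + Ec a n w b)"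
  by (induction n) (auto simp: Ec_Suc lin_lincomb fs_Ec)
lemma Fc_lincomb: "fs v \<Longrightarrow> fs w \<Longrightarrow> Fc a n (\<lambda>b. c * v b + w b) = (\<lambda>b. c * Fc a n v b + Fc a n w b)"
  by (induction n arbitrary: v w) (auto simp: Fc_Suc lin_lincomb fs_lin rowfin_Fmap)

lemma Ec_zero: "Ec a n (\<lambda>_. 0) = (\<lambda>_. 0)"
  by (induction n) (auto simp: Ec_Suc lin_zero)
lemma Fc_zero: "Fc a n (\<lambda>_. 0) = (\<lambda>_. 0)"
  by (induction n) (auto simp: Fc_Suc lin_zero)

lemma Ec_smult: "Ec a n (\<lambda>b. c * v b) = (\<lambda>b. c * Ec a n v b)"
  by (induction n) (auto simp: Ec_Suc lin_smult)
lemma Fc_smult: "Fc a n (\<lambda>b. c * v b) = (\<lambda>b. c * Fc a n v b)"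
  by (induction n arbitrary: v) (auto simp: Fc_Suc lin_smult)

lemma EcFc: "fs w \<Longrightarrow> Ec 0 n (Fc 0 n w) = (\<lambda>b. (\<Prod>j=1..n. qbr (int j)) * w b)"
proof (induction n arbitrary: w)
  case 0 thus ?case by simp
next
  case (Suc n)
  have f: "fs (lin (Fmap (int n)) w)" by (rule fs_lin[OF Suc.prems rowfin_Fmap])
  have "Ec 0 (Suc n) (Fc 0 (Suc n) w) = lin (Emap (int n)) (Ec 0 n (Fc 0 n (lin (Fmap (int n)) w)))"
    by (simp add: Ec_Suc Fc_Suc)
  also have "\<dots> = lin (Emap (int n)) (\<lambda>b. (\<Prod>j=1..n. qbr (int j)) * lin (Fmap (int n)) w b)"
    by (simp add: Suc.IH[OF f])
  also have "\<dots> = (\<lambda>b. (\<Prod>j=1..n. qbr (int j)) * (qbr (int n + 1) * w b))"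
    by (simp add: lin_smult EF_id[OF Suc.prems])
  also have "\<dots> = (\<lambda>b. (\<Prod>j=1..Suc n. qbr (int j)) * w b)"
    by (simp add: prod.nat_ivl_Suc' mult_ac add.commute)
  finally show ?case .
qed

definition lenv :: "nat \<Rightarrow> (nat \<times> bool list \<Rightarrow> K) \<Rightarrow> bool" where
  "lenv n v = (\<forall>b\<in>supp v. length (snd b) = n)"

lemma lenv_lin:
  assumes "lenv n v" "\<And>b c. length (snd b) = n \<Longrightarrow> m b c \<noteq> 0 \<Longrightarrow> length (snd c) = n'"
  shows "lenv n' (lin m v)"
  using supp_lin[of m v] assms unfolding lenv_def by blast

lemma lenv_E: "lenv (Suc n) v \<Longrightarrow> lenv n (lin (Emap k) v)"
  apply (erule lenv_lin)
  subgoal for b c by (cases b; cases c; cases "snd b") (auto split: if_splits)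
  done

lemma lenv_F: "lenv n v \<Longrightarrow> lenv (Suc n) (lin (Fmap k) v)"
  apply (erule lenv_lin)
  subgoal for b c by (cases b; cases c; cases "snd c") (auto split: if_splits)
  done

lemma lenv_act: "lenv n v \<Longrightarrow> lenv n (act k g v)"
  unfolding act_Amat
  apply (erule lenv_lin)
  subgoal for b c by (cases b; cases c) (auto dest!: TR_nz)
  done

lemma lenv_Ec: "lenv (m + n) v \<Longrightarrow> lenv m (Ec a n v)"
proof (induction n arbitrary: m)
  case 0 thus ?case by simp
next
  case (Suc n)
  have "lenv (Suc m) (Ec a n v)" using Suc.IH[of "Suc m"] Suc.prems by simp
  thus ?case by (simp only: Ec_Suc lenv_E)
qed

lemma lenv_Fc: "lenv m v \<Longrightarrow> lenv (m + n) (Fc a n v)"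
proof (induction n arbitrary: v m)
  case 0 thus ?case by simp
next
  case (Suc n)
  have "lenv (Suc m) (lin (Fmap (int (a + n))) v)" by (rule lenv_F[OF Suc.prems])
  hence "lenv (Suc m + n) (Fc a n (lin (Fmap (int (a + n))) v))" by (rule Suc.IH)
  thus ?case by (simp add: Fc_Suc)
qed

lemma lenv_smult: "lenv n v \<Longrightarrow> lenv n (\<lambda>b. c * v b)"
  unfolding lenv_def supp_def by auto

lemma Vsp_iff: "v \<in> Vsp n \<longleftrightarrow> fs v \<and> lenv n v"
  unfolding Vsp_def fs_def lenv_def supp_def by auto

lemma Ec_equiv: "fs v \<Longrightarrow> Ec a n (act (int a) g v) = act (int (a + n)) g (Ec a n v)"
proof (induction n)
  case 0 thus ?case by simp
next
  case (Suc n)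
  thus ?case by (simp add: Ec_Suc E_equiv fs_Ec add.commute)
qed

lemma Fc_equiv: "fs v \<Longrightarrow> Fc a n (act (int (a + n)) g v) = act (int a) g (Fc a n v)"
proof (induction n arbitrary: v)
  case 0 thus ?case by simp
next
  case (Suc n)
  have "Fc a (Suc n) (act (int (a + Suc n)) g v) = Fc a n (lin (Fmap (int (a + n))) (act (int (a + n) + 1) g v))"
    by (simp add: Fc_Suc add.commute)
  also have "\<dots> = Fc a n (act (int (a + n)) g (lin (Fmap (int (a + n))) v))"
    by (simp add: F_equiv Suc.prems)
  also have "\<dots> = act (int a) g (Fc a n (lin (Fmap (int (a + n))) v))"
    by (rule Suc.IH[OF fs_lin[OF Suc.prems rowfin_Fmap]])
  also have "\<dots> = act (int a) g (Fc a (Suc n) v)"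
    by (simp only: Fc_Suc)
  finally show ?case .
qed





lemma eps_val: "eps_map i (a, s) (b, s') = (if b = a \<and> i < length s \<and> s' = take (i - 1) s @ drop (i + 1) s then epsV (s ! (i - 1)) (s ! i) else 0)"
  by (simp add: eps_map_def)

lemma eta_val: "eta_map i (a, s) (b, s') = (if b = a \<and> s' = take (i - 1) s @ [False, True] @ drop (i - 1) s then 1
     else if b = a \<and> s' = take (i - 1) s @ [True, False] @ drop (i - 1) s then - inverse qq else 0)"
  by (simp add: eta_map_def)

lemma eps_comm:
  assumes "fs u" "i \<ge> 1"
  shows "lin (eps_map (Suc i)) (lin (Fmap k) u) = lin (Fmap k) (lin (eps_map i) u)"
proof -
  have "lin (eps_map (Suc i)) (lin (Fmap k) u) = lin (mmul (Fmap k) (eps_map (Suc i))) u"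
    by (rule lin_comp[OF assms(1) rowfin_Fmap])
  also have "\<dots> = lin (mmul (eps_map i) (Fmap k)) u"
  proof (rule lin_cong, rule ext)
    fix b c :: "nat \<times> bool list"
    obtain a r where b: "b = (a, r)" by (cases b)
    obtain j s' where c: "c = (j, s')" by (cases c)
    obtain i' where i: "i = Suc i'" using assms(2) by (cases i) auto
    show "mmul (Fmap k) (eps_map (Suc i)) b c = mmul (eps_map i) (Fmap k) b c"
      by (cases s') (auto simp: b c i mmul_F_row mmul_eps_row eps_val)
  qed
  also have "\<dots> = lin (Fmap k) (lin (eps_map i) u)"
    by (rule lin_comp[OF assms(1) rowfin_eps, symmetric])
  finally show ?thesis .
qed

lemma eps_local:
  assumes "fs w"
  shows "lin (eps_map 1) (lin (Fmap (int a)) (lin (Fmap (int (Suc a))) w)) = (\<lambda>_. 0)"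
proof -
  have f: "fs (lin (Fmap (int (Suc a))) w)" by (rule fs_lin[OF assms rowfin_Fmap])
  have "lin (eps_map 1) (lin (Fmap (int a)) (lin (Fmap (int (Suc a))) w))
      = lin (mmul (Fmap (int (Suc a))) (mmul (Fmap (int a)) (eps_map 1))) w"
    by (subst lin_comp[OF f rowfin_Fmap], rule lin_comp[OF assms rowfin_Fmap])
  also have "\<dots> = (\<lambda>_. 0)"
  proof (rule lin_zero_mat)
    fix b c :: "nat \<times> bool list"
    obtain i r where b: "b = (i, r)" by (cases b)
    obtain j s' where c: "c = (j, s')" by (cases c)
    show "mmul (Fmap (int (Suc a))) (mmul (Fmap (int a)) (eps_map 1)) b c = 0"
      by (cases i) (auto simp: b c mmul_F_row mmul_eps_row eps_val pw_diff pw_add qq_nz algebra_simps)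
  qed
  finally show ?thesis .
qed


lemma eta_comm:
  assumes "fs w" "i \<ge> 1" "\<And>b. b \<in> supp w \<Longrightarrow> snd b \<noteq> []"
  shows "lin (Emap k) (lin (eta_map (Suc i)) w) = lin (eta_map i) (lin (Emap k) w)"
proof -
  have "lin (Emap k) (lin (eta_map (Suc i)) w) = lin (mmul (eta_map (Suc i)) (Emap k)) w"
    by (rule lin_comp[OF assms(1) rowfin_eta])
  also have "\<dots> = lin (mmul (Emap k) (eta_map i)) w"
  proof (rule lin_cong, rule ext)
    fix b c :: "nat \<times> bool list"
    assume bs: "b \<in> supp w"
    obtain a s where b: "b = (a, s)" by (cases b)
    obtain t r where s: "s = t # r" using assms(3)[OF bs] b by (cases s) auto
    obtain j s' where c: "c = (j, s')" by (cases c)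
    obtain i' where i: "i = Suc i'" using assms(2) by (cases i) auto
    show "mmul (eta_map (Suc i)) (Emap k) b c = mmul (Emap k) (eta_map i) b c"
      by (auto simp: b c s i mmul_eta_row mmul_E_row eta_val)
  qed
  also have "\<dots> = lin (eta_map i) (lin (Emap k) w)"
    by (rule lin_comp[OF assms(1) rowfin_Emap, symmetric])
  finally show ?thesis .
qed

lemma eta_local:
  assumes "fs w"
  shows "lin (Emap k2) (lin (Emap k1) (lin (eta_map 1) w)) = (\<lambda>_. 0)"
proof -
  have f: "fs (lin (eta_map 1) w)" by (rule fs_lin[OF assms rowfin_eta])
  have "lin (Emap k2) (lin (Emap k1) (lin (eta_map 1) w))
      = lin (mmul (eta_map 1) (mmul (Emap k1) (Emap k2))) w"
    by (subst lin_comp[OF f rowfin_Emap], rule lin_comp[OF assms rowfin_eta])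
  also have "\<dots> = (\<lambda>_. 0)"
  proof (rule lin_zero_mat)
    fix b c :: "nat \<times> bool list"
    obtain i r where b: "b = (i, r)" by (cases b)
    obtain j s' where c: "c = (j, s')" by (cases c)
    show "mmul (eta_map 1) (mmul (Emap k1) (Emap k2)) b c = 0"
      by (auto simp: b c mmul_eta_row mmul_E_row qq_nz)
  qed
  finally show ?thesis .
qed





lemma eps_Fc: "fs w \<Longrightarrow> 1 \<le> i \<Longrightarrow> i + 1 \<le> n \<Longrightarrow> lin (eps_map i) (Fc a n w) = (\<lambda>_. 0)"
proof (induction i arbitrary: a n)
  case 0 thus ?case by simp
next
  case (Suc i)
  show ?case
  proof (cases "i = 0")
    case True
    then obtain m where n: "n = Suc (Suc m)" using Suc.prems by (cases n; cases "n - 1") auto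
    have "Fc a n w = lin (Fmap (int a)) (lin (Fmap (int (Suc a))) (Fc (Suc (Suc a)) m w))"
      by (simp add: n Fc_Suc2)
    thus ?thesis using eps_local[OF fs_Fc[OF Suc.prems(1)]] True by simp
  next
    case False
    then obtain m where n: "n = Suc m" using Suc.prems by (cases n) auto
    have "lin (eps_map (Suc i)) (Fc a n w) = lin (eps_map (Suc i)) (lin (Fmap (int a)) (Fc (Suc a) m w))"
      by (simp add: n Fc_Suc2)
    also have "\<dots> = lin (Fmap (int a)) (lin (eps_map i) (Fc (Suc a) m w))"
      by (rule eps_comm[OF fs_Fc[OF Suc.prems(1)]]) (use False in auto)
    also have "\<dots> = lin (Fmap (int a)) (\<lambda>_. 0)"
      using Suc.IH[where a="Suc a" and n=m, OF Suc.prems(1)] False Suc.prems n by simp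
    also have "\<dots> = (\<lambda>_. 0)" by (rule lin_zero)
    finally show ?thesis .
  qed
qed

lemma eta_Ec: "fs w \<Longrightarrow> lenv m w \<Longrightarrow> 1 \<le> i \<Longrightarrow> i + 1 \<le> n \<Longrightarrow> i \<le> m + 1 \<Longrightarrow> Ec a n (lin (eta_map i) w) = (\<lambda>_. 0)"
proof (induction i arbitrary: a n w m)
  case 0 thus ?case by simp
next
  case (Suc i)
  show ?case
  proof (cases "i = 0")
    case True
    then obtain n' where n: "n = Suc (Suc n')" using Suc.prems by (cases n; cases "n - 1") auto
    have "Ec a n (lin (eta_map (Suc i)) w) = Ec (Suc (Suc a)) n' (lin (Emap (int (Suc a))) (lin (Emap (int a)) (lin (eta_map 1) w)))"
      by (simp add: n Ec_Suc2 True)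
    thus ?thesis using eta_local[OF Suc.prems(1)] by (simp add: Ec_zero)
  next
    case False
    then obtain n' where n: "n = Suc n'" using Suc.prems by (cases n) auto
    obtain m' where m: "m = Suc m'" using Suc.prems False by (cases m) auto
    have ne: "\<And>b. b \<in> supp w \<Longrightarrow> snd b \<noteq> []" using Suc.prems(2) m unfolding lenv_def by auto
    have fE: "fs (lin (Emap (int a)) w)" by (rule fs_lin[OF Suc.prems(1) rowfin_Emap])
    have lE: "lenv m' (lin (Emap (int a)) w)" using lenv_E Suc.prems(2) m by simp
    have "Ec a n (lin (eta_map (Suc i)) w) = Ec (Suc a) n' (lin (Emap (int a)) (lin (eta_map (Suc i)) w))"
      by (simp add: n Ec_Suc2)
    also have "\<dots> = Ec (Suc a) n' (lin (eta_map i) (lin (Emap (int a)) w))"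
      using eta_comm[OF Suc.prems(1) _ ne] False by simp
    also have "\<dots> = (\<lambda>_. 0)"
      by (rule Suc.IH[OF fE lE]) (use False Suc.prems n m in auto)
    finally show ?thesis .
  qed
qed





lemma prod_nz: "(\<Prod>j=1..n. qbr (int j)) \<noteq> 0"
  by (simp add: qbr_nz)

lemma Pmap_Fc: "Pmap n v = (\<lambda>b. inverse (\<Prod>j=1..n. qbr (int j)) * Fc 0 n (Ec 0 n v) b)"
  by (simp add: Pmap_def Ecomp_Ec Fcomp_Fc)

theorem mainTheorem5:
  fixes n :: nat
  assumes "n \<ge> 1"
  shows "(\<forall>v\<in>Vsp n. Pmap n v \<in> Vsp n)
    \<and> (\<forall>v\<in>Vsp n. \<forall>w\<in>Vsp n. \<forall>c::K.
          Pmap n (\<lambda>b. c * v b + w b) = (\<lambda>b. c * Pmap n v b + Pmap n w b))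
    \<and> (\<forall>g. \<forall>v\<in>Vsp n. Pmap n (act 0 g v) = act 0 g (Pmap n v))
    \<and> (\<forall>v\<in>Vsp n. Pmap n (Pmap n v) = Pmap n v)
    \<and> (n \<ge> 2 \<longrightarrow> (\<forall>i. 1 \<le> i \<and> i \<le> n - 1 \<longrightarrow>
          (\<forall>v\<in>Vsp n. lin (eps_map i) (Pmap n v) = (\<lambda>_. 0))
        \<and> (\<forall>w\<in>Vsp (n - 2). Pmap n (lin (eta_map i) w) = (\<lambda>_. 0))))"
proof -
  define c where "c = inverse (\<Prod>j=1..n. qbr (int j))"
  have P: "Pmap n v = (\<lambda>b. c * Fc 0 n (Ec 0 n v) b)" for v
    by (simp add: Pmap_Fc c_def)
  have fsP: "fs v \<Longrightarrow> fs (Pmap n v)" for v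
    by (simp add: P fs_smult fs_Fc fs_Ec)
  have part1: "\<forall>v\<in>Vsp n. Pmap n v \<in> Vsp n"
  proof
    fix v assume "v \<in> Vsp n"
    hence v: "fs v" "lenv n v" by (auto simp: Vsp_iff)
    have "lenv 0 (Ec 0 n v)" using lenv_Ec[of 0 n v] v by simp
    hence "lenv n (Fc 0 n (Ec 0 n v))" using lenv_Fc[of 0 "Ec 0 n v" n] by simp
    thus "Pmap n v \<in> Vsp n" using v by (simp add: Vsp_iff P fs_smult fs_Fc fs_Ec lenv_smult)
  qed
  have part2: "\<forall>v\<in>Vsp n. \<forall>w\<in>Vsp n. \<forall>c::K.
          Pmap n (\<lambda>b. c * v b + w b) = (\<lambda>b. c * Pmap n v b + Pmap n w b)"
  proof (intro ballI allI)
    fix v w and d :: K assume "v \<in> Vsp n" "w \<in> Vsp n"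
    hence fv: "fs v" "fs w" by (auto simp: Vsp_iff)
    show "Pmap n (\<lambda>b. d * v b + w b) = (\<lambda>b. d * Pmap n v b + Pmap n w b)"
    proof -
      have e1: "Ec 0 n (\<lambda>b. d * v b + w b) = (\<lambda>b. d * Ec 0 n v b + Ec 0 n w b)"
        by (rule Ec_lincomb[OF fv])
      have e2: "Fc 0 n (\<lambda>b. d * Ec 0 n v b + Ec 0 n w b) = (\<lambda>b. d * Fc 0 n (Ec 0 n v) b + Fc 0 n (Ec 0 n w) b)"
        by (rule Fc_lincomb[OF fs_Ec[OF fv(1)] fs_Ec[OF fv(2)]])
      show ?thesis by (simp only: P e1 e2) (simp add: algebra_simps)
    qed
  qed
  have part3: "\<forall>g. \<forall>v\<in>Vsp n. Pmap n (act 0 g v) = act 0 g (Pmap n v)"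
  proof (intro allI ballI)
    fix g v assume "v \<in> Vsp n"
    hence fv: "fs v" by (auto simp: Vsp_iff)
    have "Ec 0 n (act 0 g v) = act (int n) g (Ec 0 n v)"
      using Ec_equiv[OF fv, of 0 n g] by simp
    moreover have "Fc 0 n (act (int n) g (Ec 0 n v)) = act 0 g (Fc 0 n (Ec 0 n v))"
      using Fc_equiv[OF fs_Ec[OF fv], of 0 n g] by simp
    ultimately show "Pmap n (act 0 g v) = act 0 g (Pmap n v)"
      by (simp add: P act_Amat lin_smult)
  qed
  have part4: "\<forall>v\<in>Vsp n. Pmap n (Pmap n v) = Pmap n v"
  proof
    fix v assume "v \<in> Vsp n"
    hence fv: "fs v" by (auto simp: Vsp_iff)
    have "Ec 0 n (Fc 0 n (Ec 0 n v)) = (\<lambda>b. (\<Prod>j=1..n. qbr (int j)) * Ec 0 n v b)"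
      by (rule EcFc[OF fs_Ec[OF fv]])
    hence "Pmap n (Pmap n v) = (\<lambda>b. c * (c * (\<Prod>j=1..n. qbr (int j)) * Fc 0 n (Ec 0 n v) b))"
      by (simp add: P Ec_smult Fc_smult mult.assoc)
    also have "c * (\<Prod>j=1..n. qbr (int j)) = 1" unfolding c_def by (rule left_inverse[OF prod_nz])
    finally show "Pmap n (Pmap n v) = Pmap n v" by (simp add: P)
  qed
  have part5: "n \<ge> 2 \<longrightarrow> (\<forall>i. 1 \<le> i \<and> i \<le> n - 1 \<longrightarrow>
          (\<forall>v\<in>Vsp n. lin (eps_map i) (Pmap n v) = (\<lambda>_. 0))
        \<and> (\<forall>w\<in>Vsp (n - 2). Pmap n (lin (eta_map i) w) = (\<lambda>_. 0)))"
  proof (intro impI allI conjI ballI)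
    fix i v assume n2: "n \<ge> 2" and i: "1 \<le> i \<and> i \<le> n - 1" and "v \<in> Vsp n"
    hence fv: "fs v" by (auto simp: Vsp_iff)
    show "lin (eps_map i) (Pmap n v) = (\<lambda>_. 0)"
    proof -
      have "lin (eps_map i) (Fc 0 n (Ec 0 n v)) = (\<lambda>_. 0)"
        by (rule eps_Fc[OF fs_Ec[OF fv]]) (use i n2 in auto)
      thus ?thesis by (simp add: P lin_smult)
    qed
  next
    fix i w assume n2: "n \<ge> 2" and i: "1 \<le> i \<and> i \<le> n - 1" and "w \<in> Vsp (n - 2)"
    hence fw: "fs w" "lenv (n - 2) w" by (auto simp: Vsp_iff)
    show "Pmap n (lin (eta_map i) w) = (\<lambda>_. 0)"
    proof -
      have "Ec 0 n (lin (eta_map i) w) = (\<lambda>_. 0)"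
        by (rule eta_Ec[OF fw]) (use i n2 in auto)
      thus ?thesis by (simp add: P Fc_zero)
    qed
  qed
  show ?thesis by (intro conjI part1 part2 part3 part4 part5)
qed


end
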